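(* Let $\langle V, Q\rangle$ be a Federated Byzantine Agreement System with quorum slice cardinality map $C$. If $C(v) > |V|/2$ for every $v \in V$, then $\langle V, Q\rangle$ enjoys quorum intersection, i.e. any two quorums $U_1, U_2$ satisfy $U_1\cap U_2\neq\varnothing$.
   Context: An FBAS is a pair $\langle V, Q\rangle$ where $V$ is a finite set of nodes and $Q : V \to 2^{2^V}\setminus\{\varnothing\}$ assigns to each node a nonempty collection of subsets of $V$ (its quorum slices), such that for all $v\in V$ and all $q\in Q(v)$, $v \in q$. A set $U \subseteq V$ is a quorum iff $U\neq\varnothing$ and for every $u\in U$ there exists $q \in Q(u)$ with $q\subseteq U$. The FBAS enjoys quorum intersection iff every two quorums share a node. The quorum slice cardinality map is $C(v)=\min\{|q| : q\in Q(v)\}$. *)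

theory Defs
  imports Main
begin

definition fbas :: "'a set \<Rightarrow> ('a \<Rightarrow> 'a set set) \<Rightarrow> bool" where
  "fbas V Q \<longleftrightarrow> finite V \<and>
     (\<forall>v\<in>V. Q v \<noteq> {} \<and> Q v \<subseteq> Pow V \<and> (\<forall>q\<in>Q v. v \<in> q))"

definition is_quorum :: "'a set \<Rightarrow> ('a \<Rightarrow> 'a set set) \<Rightarrow> 'a set \<Rightarrow> bool" where
  "is_quorum V Q U \<longleftrightarrow> U \<subseteq> V \<and> U \<noteq> {} \<and> (\<forall>u\<in>U. \<exists>q\<in>Q u. q \<subseteq> U)"

definition quorum_intersection :: "'a set \<Rightarrow> ('a \<Rightarrow> 'a set set) \<Rightarrow> bool" where
  "quorum_intersection V Q \<longleftrightarrow>
     (\<forall>U1 U2. is_quorum V Q U1 \<and> is_quorum V Q U2 \<longrightarrow> U1 \<inter> U2 \<noteq> {})"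

definition slice_card :: "('a \<Rightarrow> 'a set set) \<Rightarrow> 'a \<Rightarrow> nat" where
  "slice_card Q v = Min (card ` Q v)"

end

theory Submission
  imports Defs
begin

lemma quorum_big:
  assumes f: "fbas V Q" and c: "\<forall>v\<in>V. 2 * slice_card Q v > card V"
    and qu: "is_quorum V Q U"
  shows "2 * card U > card V"
proof -
  from qu obtain u where u: "u \<in> U" unfolding is_quorum_def by blast
  with qu obtain q where q: "q \<in> Q u" "q \<subseteq> U" unfolding is_quorum_def by blast
  have uV: "u \<in> V" "U \<subseteq> V" using u qu unfolding is_quorum_def by auto
  have fin: "finite V" using f unfolding fbas_def by simp
  have "Q u \<subseteq> Pow V" using f uV unfolding fbas_def by auto
  hence finQ: "finite (Q u)" using fin by (meson finite_Pow_iff finite_subset)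
  have "slice_card Q u \<le> card q" unfolding slice_card_def
    using finQ q(1) by (simp add: Min_le)
  moreover have "card q \<le> card U" using q(2) uV(2) fin by (meson card_mono finite_subset)
  ultimately show ?thesis using c uV(1) by fastforce
qed

theorem mainTheorem2:
  fixes V :: "'a set" and Q :: "'a \<Rightarrow> 'a set set"
  assumes "fbas V Q"
    and "\<forall>v\<in>V. 2 * slice_card Q v > card V"
  shows "quorum_intersection V Q"
  unfolding quorum_intersection_def
proof (intro allI impI notI)
  fix U1 U2 assume h: "is_quorum V Q U1 \<and> is_quorum V Q U2" and d: "U1 \<inter> U2 = {}"
  have a: "2 * card U1 > card V" "2 * card U2 > card V"
    using quorum_big[OF assms] h by auto
  have fin: "finite V" using assms(1) unfolding fbas_def by simp
  have s: "U1 \<union> U2 \<subseteq> V" using h unfolding is_quorum_def by auto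
  have "card (U1 \<union> U2) = card U1 + card U2"
    using d s fin by (meson card_Un_disjoint finite_subset le_sup_iff)
  moreover have "card (U1 \<union> U2) \<le> card V" using s fin by (simp add: card_mono)
  ultimately show False using a by linarith
qed

end
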